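(* Consider $n$ processes running the Median-based Byzantine Agreement algorithm (described in the context) with any parameter $\alpha$ satisfying $0 \le \alpha < \lceil n/6 \rceil - 1$, in a system with fewer than $\lfloor n/3 \rfloor$ Byzantine processes. Then the algorithm solves Multi-valued Byzantine Agreement with interval validity: (consistency) all non-faulty processes output the same value $d$, and (interval validity) $d \in \{\min T,\dots,\max T\}$, where $T$ is the multiset of inputs of the non-faulty processes.
   Context: System model: $n$ processes $p_1,\dots,p_n$ communicate over a complete network in fully synchronous rounds (every message sent in a round is delivered before the next round); the receiver of a message knows its sender. A Byzantine (faulty) process may deviate arbitrarily from the protocol, e.g. send different messages to different processes or omit messages; the other processes are non-faulty. Each process $p_i$ has an input value $v_i$ from a totally ordered domain $V$ (integers); $\bot \notin V$ is a special default value. WeakMVBA: a Byzantine agreement protocol (tolerating the given number of Byzantine processes) in which each process has an input and all non-faulty processes terminate with: (consistency) the same decision value; (weak validity) if all non-faulty processes have the same input $v$, the decision is $v$; otherwise the decision is some value of $V\cup\{\bot\}$. Median-based Byzantine Agreement algorithm with parameter $\alpha$, run by a process with input $v$: (1) send $v$ to all processes (including itself); initialize an array $A[1..n]$ to $\bot$ and set $A[i]$ to the value received from $p_i$. (2) For each $i=1,\dots,n$, in parallel, run an instance of WeakMVBA in which this process uses input $A[i]$, and replace $A[i]$ by the decision of that instance. (3) Output select\_value$(A)$, defined as: delete all $\bot$ entries of $A$ to obtain a list $A_{\not\bot}$ of length $k$; let $C[u]$ be the number of occurrences of $u$ in $A_{\not\bot}$ and let $m$ be a value maximizing $C[m]$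 (ties broken by a fixed deterministic rule); if $C[m] \ge \lfloor k/3\rfloor + 1 + \alpha$, output $m$; otherwise sort $A_{\not\bot}$ in nondecreasing order and output its median element (the entry at position $\lfloor k/2 \rfloor$; for even $k$ the lower of the two middle values). *)

theory Defs
  imports Complex_Main
begin

text \<open>Values V = int; the default value bot is None. Processes are 0..n-1.\<close>

definition non_bot :: "int option list \<Rightarrow> int list" where
  "non_bot A = map the (filter (\<lambda>x. x \<noteq> None) A)"

definition tie_rule :: "(int list \<Rightarrow> int) \<Rightarrow> bool" where
  "tie_rule pick \<longleftrightarrow> (\<forall>xs. xs \<noteq> [] \<longrightarrow>
      pick xs \<in> set xs \<and> (\<forall>u. count_list xs u \<le> count_list xs (pick xs)))"

text \<open>select_value with parameter alpha; median = lower middle element of the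
  sorted list (0-based index (k-1) div 2).\<close>
definition select_value :: "(int list \<Rightarrow> int) \<Rightarrow> nat \<Rightarrow> int option list \<Rightarrow> int" where
  "select_value pick \<alpha> A =
     (let L = non_bot A; k = length L; m = pick L in
      if count_list L m \<ge> k div 3 + 1 + \<alpha> then m
      else sort L ! ((k - 1) div 2))"

end

theory Submission imports Defs "HOL-Library.Multiset" begin

lemma count_le_filter:
  assumes "P m" shows "count_list xs m \<le> length (filter P xs)"
  using assms by (induction xs) auto

lemma filter_len_mono:
  assumes "\<And>x. P x \<Longrightarrow> Q x" shows "length (filter P xs) \<le> length (filter Q xs)"
  using assms by (induction xs) auto

lemma sorted_low:
  fixes xs :: "int list"
  assumes "sorted xs" "p < length xs" "length (filter (\<lambda>x. x < lo) xs) \<le> p"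
  shows "lo \<le> xs ! p"
proof (rule ccontr)
  assume "\<not> lo \<le> xs ! p"
  hence "\<forall>i\<le>p. xs ! i < lo" using assms sorted_nth_mono by fastforce
  hence "filter (\<lambda>x. x < lo) (take (Suc p) xs) = take (Suc p) xs"
    by (auto simp: filter_id_conv set_conv_nth)
  hence "length (filter (\<lambda>x. x < lo) (take (Suc p) xs)) = Suc p" using assms by simp
  moreover have "length (filter (\<lambda>x. x < lo) (take (Suc p) xs)) \<le> length (filter (\<lambda>x. x < lo) xs)"
    by (metis append_take_drop_id filter_append length_append le_add1)
  ultimately show False using assms by simp
qed

lemma sorted_high:
  fixes xs :: "int list"
  assumes "sorted xs" "p < length xs" "length (filter (\<lambda>x. hi < x) xs) < length xs - p"
  shows "xs ! p \<le> hi"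
proof (rule ccontr)
  assume "\<not> xs ! p \<le> hi"
  hence "\<forall>i. p \<le> i \<and> i < length xs \<longrightarrow> hi < xs ! i" using assms sorted_nth_mono by fastforce
  hence "filter (\<lambda>x. hi < x) (drop p xs) = drop p xs"
    by (auto simp: filter_id_conv set_conv_nth)
  hence "length (filter (\<lambda>x. hi < x) (drop p xs)) = length xs - p" using assms by simp
  moreover have "length (filter (\<lambda>x. hi < x) (drop p xs)) \<le> length (filter (\<lambda>x. hi < x) xs)"
    by (metis append_take_drop_id filter_append length_append le_add2)
  ultimately show False using assms by simp
qed

lemma len_filter_sort: "length (filter P (sort xs)) = length (filter P xs)"
  by (metis mset_filter mset_sort size_mset)

lemma sel_in_range:
  assumes tie: "tie_rule pick"
    and b3: "3 * length (filter (\<lambda>x. x < lo \<or> hi < x) (non_bot A)) \<le> length (non_bot A)"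
    and ne: "non_bot A \<noteq> []"
  shows "lo \<le> select_value pick \<alpha> A \<and> select_value pick \<alpha> A \<le> hi"
proof -
  define L where "L = non_bot A"
  define b where "b = length (filter (\<lambda>x. x < lo \<or> hi < x) L)"
  define k where "k = length L"
  have kpos: "k > 0" using ne L_def k_def by simp
  have b3': "3 * b \<le> k" using b3 L_def b_def k_def by simp
  have lowb: "length (filter (\<lambda>x. x < lo) L) \<le> b" unfolding b_def
    by (rule filter_len_mono) auto  
  have highb: "length (filter (\<lambda>x. hi < x) L) \<le> b" unfolding b_def
    by (rule filter_len_mono) auto
  show ?thesis
  proof (cases "count_list L (pick L) \<ge> k div 3 + 1 + \<alpha>")
    case True
    hence sv: "select_value pick \<alpha> A = pick L" unfolding select_value_def L_def k_def Let_def by simp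
    show ?thesis
    proof (rule ccontr)
      assume "\<not> ?thesis"
      hence "pick L < lo \<or> hi < pick L" using sv by auto
      hence "count_list L (pick L) \<le> b" unfolding b_def
        by (rule count_le_filter[where P="\<lambda>x. x < lo \<or> hi < x"])
      with True b3' show False by linarith
    qed
  next
    case False
    hence sv: "select_value pick \<alpha> A = sort L ! ((k - 1) div 2)" unfolding select_value_def L_def k_def Let_def by simp
    have p: "(k - 1) div 2 < length (sort L)" using kpos k_def by (cases L) auto
    have 1: "lo \<le> sort L ! ((k - 1) div 2)"
      apply (rule sorted_low) using p lowb b3' kpos by (auto simp: len_filter_sort)
    have 2: "sort L ! ((k - 1) div 2) \<le> hi"
      apply (rule sorted_high) using p highb b3' kpos k_def by (auto simp: len_filter_sort)
    show ?thesis using 1 2 sv by simp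
  qed
qed

theorem theorem1:
  fixes n \<alpha> :: nat
    and F :: "nat set"
    and v :: "nat \<Rightarrow> int"
    and recv :: "nat \<Rightarrow> nat \<Rightarrow> int option"
    and dec :: "nat \<Rightarrow> nat \<Rightarrow> int option"
    and pick :: "int list \<Rightarrow> int"
  assumes tie: "tie_rule pick"
    and F_sub: "F \<subseteq> {..<n}"
    and F_card: "card F < n div 3"
    and alpha_bound: "int \<alpha> < \<lceil>real n / 6\<rceil> - 1"
    and recv_ok: "\<forall>j\<in>{..<n} - F. \<forall>i\<in>{..<n} - F. recv j i = Some (v i)"
    and mvba_consistency: "\<forall>i<n. \<forall>j\<in>{..<n} - F. \<forall>k\<in>{..<n} - F. dec j i = dec k i"
    and mvba_weak_validity: "\<forall>i<n. \<forall>x. (\<forall>j\<in>{..<n} - F. recv j i = x)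
                                      \<longrightarrow> (\<forall>j\<in>{..<n} - F. dec j i = x)"
  shows "\<exists>d. (\<forall>j\<in>{..<n} - F. select_value pick \<alpha> (map (dec j) [0..<n]) = d)
             \<and> Min (v ` ({..<n} - F)) \<le> d \<and> d \<le> Max (v ` ({..<n} - F))"
proof -
  define C where "C = {..<n} - F"
  have finF: "finite F" using F_sub finite_subset by blast
  have cardC: "card C = n - card F" unfolding C_def using F_sub finF by (simp add: card_Diff_subset)
  have "card C > 0" using cardC F_card by linarith
  hence "C \<noteq> {}" by auto
  then obtain j0 where j0: "j0 \<in> C" by blast
  have finC: "finite C" unfolding C_def by simp
  define lo where "lo = Min (v ` C)"
  define hi where "hi = Max (v ` C)"
  define A where "A = map (dec j0) [0..<n]"
  have sameA: "map (dec j) [0..<n] = A" if "j \<in> C" for j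
    unfolding A_def
  proof (rule map_cong[OF refl])
    fix i assume "i \<in> set [0..<n]" hence "i < n" by simp
    thus "dec j i = dec j0 i" using mvba_consistency that j0 unfolding C_def by blast
  qed
  have decC: "dec j0 i = Some (v i)" if "i \<in> C" for i
  proof -
    have "\<forall>j\<in>{..<n} - F. recv j i = Some (v i)" using recv_ok that unfolding C_def by blast
    moreover have "i < n" using that C_def by simp
    ultimately show ?thesis using mvba_weak_validity j0 unfolding C_def by blast
  qed
  have inC: "lo \<le> v i \<and> v i \<le> hi" if "i \<in> C" for i
    unfolding lo_def hi_def using finC that by auto
  define out where "out i = (dec j0 i \<noteq> None \<and> (the (dec j0 i) < lo \<or> hi < the (dec j0 i)))" for i
  have nb: "non_bot A = map (\<lambda>i. the (dec j0 i)) (filter (\<lambda>i. dec j0 i \<noteq> None) [0..<n])"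
    unfolding non_bot_def A_def by (simp add: filter_map o_def)
  have lb: "length (filter (\<lambda>x. x < lo \<or> hi < x) (non_bot A)) = card {i. i < n \<and> out i}"
    unfolding nb apply (simp add: filter_map o_def filter_filter length_filter_conv_card)
    apply (rule arg_cong[where f=card]) apply (auto simp: out_def) done
  have lk: "length (non_bot A) = card {i. i < n \<and> dec j0 i \<noteq> None}"
    unfolding nb apply (simp add: length_filter_conv_card)
    apply (rule arg_cong[where f=card]) apply auto done
  have "{i. i < n \<and> out i} \<subseteq> F"
  proof
    fix i assume "i \<in> {i. i < n \<and> out i}"
    hence "i < n" "out i" by auto
    show "i \<in> F"
    proof (rule ccontr)
      assume "i \<notin> F"
      hence "i \<in> C" using \<open>i < n\<close> C_def by simp
      thus False using decC[OF \<open>i \<in> C\<close>] inC[OF \<open>i \<in> C\<close>] \<open>out i\<close> unfolding out_def by auto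
    qed
  qed
  hence b: "card {i. i < n \<and> out i} \<le> card F" using finF card_mono by blast
  have sub: "C \<union> {i. i < n \<and> out i} \<subseteq> {i. i < n \<and> dec j0 i \<noteq> None}"
  proof
    fix i assume "i \<in> C \<union> {i. i < n \<and> out i}"
    thus "i \<in> {i. i < n \<and> dec j0 i \<noteq> None}"
    proof
      assume "i \<in> C" thus ?thesis using decC[of i] C_def by auto
    next
      assume "i \<in> {i. i < n \<and> out i}" thus ?thesis unfolding out_def by auto
    qed
  qed
  have disj: "C \<inter> {i. i < n \<and> out i} = {}"
  proof -
    have "\<not> out i" if "i \<in> C" for i using decC[OF that] inC[OF that] unfolding out_def by auto
    thus ?thesis by blast
  qed
  have "card (C \<union> {i. i < n \<and> out i}) = card C + card {i. i < n \<and> out i}"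
    using card_Un_disjoint[OF finC _ disj] by simp
  moreover have "card (C \<union> {i. i < n \<and> out i}) \<le> card {i. i < n \<and> dec j0 i \<noteq> None}"
    using sub by (intro card_mono) auto
  ultimately have k: "card C + card {i. i < n \<and> out i} \<le> length (non_bot A)" using lk by simp
  have b3: "3 * length (filter (\<lambda>x. x < lo \<or> hi < x) (non_bot A)) \<le> length (non_bot A)"
    using k b cardC F_card lb by linarith
  have "length (non_bot A) > 0" using k cardC F_card by linarith
  hence ne: "non_bot A \<noteq> []" by auto
  have r: "lo \<le> select_value pick \<alpha> A \<and> select_value pick \<alpha> A \<le> hi"
    by (rule sel_in_range[OF tie b3 ne])
  show ?thesis
  proof (intro exI conjI ballI)
    fix j assume "j \<in> {..<n} - F" hence "j \<in> C" using C_def by simp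
    thus "select_value pick \<alpha> (map (dec j) [0..<n]) = select_value pick \<alpha> A" using sameA by simp
  next
    show "Min (v ` ({..<n} - F)) \<le> select_value pick \<alpha> A" using r unfolding lo_def C_def by simp
  next
    show "select_value pick \<alpha> A \<le> Max (v ` ({..<n} - F))" using r unfolding hi_def C_def by simp
  qed
qed

end
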